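(* Let $n,m\ge2$ with $n\mid m$ and $\gcd(m,n_0)=1$. Let $f\colon G_n\times G_m\to\{0,1\}$ satisfy $\max_{\gamma\in S,\,i,j<2}|u(\gamma,i,j)-v_f(\gamma,i,j)|<\delta$, where $v_f(\gamma,i,j)=|\{(x,y)\in G_n\times G_m: f(x,y)=i,\ f(\pi_n(\gamma)x,\pi_m(\gamma)y)=j\}|/(|G_n||G_m|)$. Then there exists $Z\subseteq G_n$ such that $|\{(x,y): f(x,y)\ne f_Z(x,y)\}|<\frac1{16}|G_n||G_m|$.
   Context: $d\ge2$; $S$ is a finite symmetric subset of $\mathrm{SL}_d(\mathbb{Z})$. $G_n:=\mathrm{SL}_d(\mathbb{Z}/n\mathbb{Z})$, $\pi_n$ is reduction mod $n$ (also $G_m\to G_n$ for $n\mid m$). For a finite group $G$ and $A,T\subseteq G$, $\partial(A,T)=\{a\in A: Ta\not\subseteq A\}$ and $h(G,T)=\min\{|\partial(A,T)|/|A|:\emptyset\neq A\subseteq G, |A|\le|G|/2\}$. Fix $n_0\in\mathbb{N}^+$ and $\epsilon>0$ such that $h(G_m,\pi_m(S))\ge\epsilon$ for all $m\ge2$ with $\gcd(m,n_0)=1$; $\delta:=\epsilon/(32|S|)$. $u(\gamma,i,j)=1/2$ if $i=j$ and $0$ otherwise ($\gamma\in S$, $i,j\in\{0,1\}$). For $Z\subseteq G_n$, $f_Z\colon G_n\times G_m\to\{0,1\}$ is $f_Z(x,y)=1$ if $\pi_n(y)^{-1}x\in Z$ and $0$ otherwise. *)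

theory Defs
  imports "HOL-Analysis.Analysis"
begin

text \<open>Integer d x d matrices; the dimension d is the cardinality of the index type 'd.\<close>

definition SLZ :: "(int^'d^'d) set" where
  "SLZ = {A. det A = 1}"

definition redmat :: "nat \<Rightarrow> int^'d^'d \<Rightarrow> int^'d^'d" where
  "redmat n A = (\<chi> i j. A $ i $ j mod int n)"

text \<open>G_n = SL_d(Z/nZ), represented by matrices with entries in {0..n-1}.\<close>
definition Gmod :: "nat \<Rightarrow> (int^'d^'d) set" where
  "Gmod n = {A. (\<forall>i j. 0 \<le> A $ i $ j \<and> A $ i $ j < int n) \<and> det A mod int n = 1 mod int n}"

definition mulG :: "nat \<Rightarrow> int^'d^'d \<Rightarrow> int^'d^'d \<Rightarrow> int^'d^'d" where
  "mulG n A B = redmat n (A ** B)"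

definition idG :: "nat \<Rightarrow> int^'d^'d" where
  "idG n = redmat n (mat 1)"

definition invG :: "nat \<Rightarrow> int^'d^'d \<Rightarrow> int^'d^'d" where
  "invG n A = (THE B. B \<in> Gmod n \<and> mulG n B A = idG n)"

definition bdry :: "('a \<Rightarrow> 'a \<Rightarrow> 'a) \<Rightarrow> 'a set \<Rightarrow> 'a set \<Rightarrow> 'a set" where
  "bdry mul A T = {a \<in> A. \<not> ((\<lambda>t. mul t a) ` T \<subseteq> A)}"

definition hexp :: "'a set \<Rightarrow> ('a \<Rightarrow> 'a \<Rightarrow> 'a) \<Rightarrow> 'a set \<Rightarrow> real" where
  "hexp G mul T = Min {real (card (bdry mul A T)) / real (card A) | A.
       A \<subseteq> G \<and> A \<noteq> {} \<and> 2 * card A \<le> card G}"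

definition uu :: "nat \<Rightarrow> nat \<Rightarrow> real" where
  "uu i j = (if i = j then 1/2 else 0)"

definition vf :: "nat \<Rightarrow> nat \<Rightarrow> (int^'d^'d \<Rightarrow> int^'d^'d \<Rightarrow> nat) \<Rightarrow> int^'d^'d \<Rightarrow> nat \<Rightarrow> nat \<Rightarrow> real" where
  "vf n m f \<gamma> i j =
     real (card {(x, y). x \<in> Gmod n \<and> y \<in> Gmod m \<and> f x y = i \<and>
                  f (mulG n (redmat n \<gamma>) x) (mulG m (redmat m \<gamma>) y) = j})
     / (real (card (Gmod n :: (int^'d^'d) set)) * real (card (Gmod m :: (int^'d^'d) set)))"

definition fZ :: "nat \<Rightarrow> (int^'d^'d) set \<Rightarrow> int^'d^'d \<Rightarrow> int^'d^'d \<Rightarrow> nat" where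
  "fZ n Z x y = (if mulG n (invG n (redmat n y)) x \<in> Z then 1 else 0)"

end

theory Submission
  imports Defs "HOL-Algebra.Group"
begin


lemma row_expand: "(\<Sum>i\<in>UNIV. (v::'a::comm_ring_1^'n) $ i *s axis i 1) = v"
  proof -
  have "(\<Sum>i\<in>UNIV. v $ i *s axis i 1) $ l = v $ l" for l
    by (simp add: sum_component axis_def if_distrib cong: if_cong)
  then show ?thesis by (simp add: vec_eq_iff)
qed

lemma adj_right2:
  fixes A :: "int^'n^'n"
  defines "C \<equiv> (\<chi> i k. det ((\<chi> r. if r = k then axis i 1 else row r A) :: int^'n^'n))"
  shows "A ** C = (\<chi> j k. if j = k then det A else 0)"
proof -
  have "(A ** C) $ j $ k = (if j = k then det A else 0)" for j k
  proof -
    have "(A ** C) $ j $ k = (\<Sum>i\<in>UNIV. A$j$i * det ((\<chi> r. if r = k then axis i 1 else row r A) :: int^'n^'n))"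
      by (simp add: matrix_matrix_mult_def C_def)
    also have "\<dots> = (\<Sum>i\<in>UNIV. det ((\<chi> r. if r = k then A$j$i *s axis i 1 else row r A) :: int^'n^'n))"
      by (simp add: det_row_mul)
    also have "\<dots> = det ((\<chi> r. if r = k then (\<Sum>i\<in>UNIV. A$j$i *s axis i 1) else row r A) :: int^'n^'n)"
      by (rule det_linear_row_sum[symmetric]) simp
    also have "\<dots> = det ((\<chi> r. if r = k then row j A else row r A) :: int^'n^'n)"
      proof -
      have "(\<Sum>i\<in>UNIV. A$j$i *s axis i 1) = row j A"
        using row_expand[of "row j A"] by (simp add: row_def)
      then show ?thesis by (simp only:)
    qed
    also have "\<dots> = (if j = k then det A else 0)"
    proof (cases "j = k")
      case True
      have "(\<chi> r. if r = k then row j A else row r A) = A" using True by (simp add: vec_eq_iff row_def)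
      then show ?thesis using True by simp
    next
      case False
      show ?thesis using False
        by (simp, intro det_identical_rows[of j k]) (auto simp: row_def vec_eq_iff)
    qed
    finally show ?thesis .
  qed
  then show ?thesis by (simp add: vec_eq_iff)
qed
lemma redmat_nth[simp]: "redmat k A $ i $ j = A $ i $ j mod int k"
  by (simp add: redmat_def)

lemma redmat_mul_left: "redmat k (redmat k A ** B) = redmat k (A ** B)"
proof -
  have "(\<Sum>l\<in>UNIV. (A$i$l mod int k) * B$l$j) mod int k = (\<Sum>l\<in>UNIV. A$i$l * B$l$j) mod int k" for i j
  proof -
    have "(\<Sum>l\<in>UNIV. (A$i$l mod int k) * B$l$j) mod int k = (\<Sum>l\<in>UNIV. (A$i$l mod int k) * B$l$j mod int k) mod int k"
      by (simp add: mod_sum_eq)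
    also have "\<dots> = (\<Sum>l\<in>UNIV. A$i$l * B$l$j mod int k) mod int k"
      by (simp add: mod_mult_left_eq)
    also have "\<dots> = (\<Sum>l\<in>UNIV. A$i$l * B$l$j) mod int k"
      by (simp add: mod_sum_eq)
    finally show ?thesis .
  qed
  then show ?thesis by (simp add: vec_eq_iff matrix_matrix_mult_def)
qed

lemma redmat_mul_right: "redmat k (A ** redmat k B) = redmat k (A ** B)"
proof -
  have "(\<Sum>l\<in>UNIV. A$i$l * (B$l$j mod int k)) mod int k = (\<Sum>l\<in>UNIV. A$i$l * B$l$j) mod int k" for i j
  proof -
    have "(\<Sum>l\<in>UNIV. A$i$l * (B$l$j mod int k)) mod int k = (\<Sum>l\<in>UNIV. A$i$l * (B$l$j mod int k) mod int k) mod int k"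
      by (simp add: mod_sum_eq)
    also have "\<dots> = (\<Sum>l\<in>UNIV. A$i$l * B$l$j mod int k) mod int k"
      by (simp add: mod_mult_right_eq)
    also have "\<dots> = (\<Sum>l\<in>UNIV. A$i$l * B$l$j) mod int k"
      by (simp add: mod_sum_eq)
    finally show ?thesis .
  qed
  then show ?thesis by (simp add: vec_eq_iff matrix_matrix_mult_def)
qed

lemma redmat_redmat: "n dvd m \<Longrightarrow> redmat n (redmat m A) = redmat n A"
  by (simp add: vec_eq_iff mod_mod_cancel)

lemma det_cong_mod:
  fixes A B :: "int^'n^'n"
  assumes "\<And>i j. A$i$j mod k = B$i$j mod k"
  shows "det A mod k = det B mod k"
proof -
  have pr: "(\<Prod>i\<in>UNIV. A$i$p i) mod k = (\<Prod>i\<in>UNIV. B$i$p i) mod k" for p :: "'n \<Rightarrow> 'n"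
  proof -
    have "(\<Prod>i\<in>UNIV. A$i$p i) mod k = (\<Prod>i\<in>UNIV. A$i$p i mod k) mod k" by (simp add: mod_prod_eq)
    also have "\<dots> = (\<Prod>i\<in>UNIV. B$i$p i mod k) mod k" using assms by simp
    also have "\<dots> = (\<Prod>i\<in>UNIV. B$i$p i) mod k" by (simp add: mod_prod_eq)
    finally show ?thesis .
  qed
  let ?P = "{p. p permutes (UNIV::'n set)}"
  have "det A mod k = (\<Sum>p\<in>?P. of_int (sign p) * (\<Prod>i\<in>UNIV. A$i$p i) mod k) mod k"
    by (simp add: det_def mod_sum_eq)
  also have "\<dots> = (\<Sum>p\<in>?P. of_int (sign p) * ((\<Prod>i\<in>UNIV. A$i$p i) mod k) mod k) mod k"
    by (simp add: mod_mult_right_eq)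
  also have "\<dots> = (\<Sum>p\<in>?P. of_int (sign p) * ((\<Prod>i\<in>UNIV. B$i$p i) mod k) mod k) mod k"
    using pr by simp
  also have "\<dots> = (\<Sum>p\<in>?P. of_int (sign p) * (\<Prod>i\<in>UNIV. B$i$p i) mod k) mod k"
    by (simp add: mod_mult_right_eq)
  also have "\<dots> = det B mod k"
    by (simp add: det_def mod_sum_eq)
  finally show ?thesis .
qed

lemma det_redmat: "det (redmat k A) mod int k = det A mod int k"
  by (rule det_cong_mod) simp

lemma Gmod_redmat: "A \<in> Gmod k \<Longrightarrow> redmat k A = A"
  by (simp add: Gmod_def vec_eq_iff)

lemma redmat_in_Gmod:
  assumes "k > 0" "det A mod int k = 1 mod int k"
  shows "redmat k A \<in> Gmod k"
  using assms det_redmat[of k A] by (simp add: Gmod_def)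

lemma mulG_closed:
  assumes "k > 0" "A \<in> Gmod k" "B \<in> Gmod k"
  shows "mulG k A B \<in> Gmod k"
proof -
  have "det (A ** B) mod int k = (det A mod int k) * (det B mod int k) mod int k"
    by (simp add: det_mul mod_mult_eq)
  also have "\<dots> = 1 mod int k" using assms by (simp add: Gmod_def mod_mult_eq)
  finally show ?thesis unfolding mulG_def by (rule redmat_in_Gmod[OF assms(1)])
qed

lemma idG_closed: "k > 0 \<Longrightarrow> idG k \<in> Gmod k"
  unfolding idG_def by (rule redmat_in_Gmod) auto

lemma mulG_assoc: "mulG k (mulG k A B) C = mulG k A (mulG k B C)"
  by (simp add: mulG_def redmat_mul_left redmat_mul_right matrix_mul_assoc)

lemma mulG_lid: "A \<in> Gmod k \<Longrightarrow> mulG k (idG k) A = A"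
  by (simp add: mulG_def idG_def redmat_mul_left Gmod_redmat)

lemma linv_ex:
  assumes "k > 0" "A \<in> Gmod k"
  shows "\<exists>B\<in>Gmod k. mulG k B A = idG k"
proof -
  obtain C where C: "transpose A ** C = (\<chi> j k. if j = k then det (transpose A) else 0)"
    using adj_right2 by blast
  have D: "transpose C ** A = (\<chi> j k. if j = k then det A else 0)"
  proof -
    have "transpose C ** A = transpose (transpose A ** C)" by (simp add: matrix_transpose_mul)
    also have "\<dots> = transpose (\<chi> j k. if j = k then det A else 0)" using C by (simp only: det_transpose)
    also have "\<dots> = (\<chi> j k. if j = k then det A else 0)" by (simp add: transpose_def vec_eq_iff)
    finally show ?thesis .
  qed
  have dA: "det A mod int k = 1 mod int k" using assms by (simp add: Gmod_def)
  have E: "mulG k (redmat k (transpose C)) A = idG k"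
    unfolding mulG_def idG_def redmat_mul_left D
    using dA by (simp add: vec_eq_iff mat_def)
  have "det (transpose C) mod int k = det (transpose C) * det A mod int k"
    using dA by (metis mod_mult_right_eq mult.right_neutral)
  also have "\<dots> = det (redmat k (transpose C ** A)) mod int k"
    by (simp add: det_redmat det_mul)
  also have "\<dots> = 1 mod int k"
    using E unfolding mulG_def redmat_mul_left idG_def by (simp add: det_redmat)
  finally have "redmat k (transpose C) \<in> Gmod k" by (rule redmat_in_Gmod[OF assms(1)])
  with E show ?thesis by blast
qed

definition GG :: "nat \<Rightarrow> (int^'d^'d) monoid" where
  "GG k = \<lparr>carrier = Gmod k, mult = mulG k, one = idG k\<rparr>"

lemma GG_group: "k > 0 \<Longrightarrow> group (GG k)"
  by (rule groupI) (auto simp: GG_def mulG_closed idG_closed mulG_assoc mulG_lid linv_ex)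

lemma invG_eq: assumes "k > 0" "A \<in> Gmod k" shows "invG k A = inv\<^bsub>GG k\<^esub> A"
proof -
  interpret group "GG k" using GG_group[OF assms(1)] .
  have c: "A \<in> carrier (GG k)" using assms by (simp add: GG_def)
  show ?thesis unfolding invG_def
  proof (rule the_equality)
    show "inv\<^bsub>GG k\<^esub> A \<in> Gmod k \<and> mulG k (inv\<^bsub>GG k\<^esub> A) A = idG k"
      using l_inv[OF c] inv_closed[OF c] by (simp add: GG_def)
    fix B assume "B \<in> Gmod k \<and> mulG k B A = idG k"
    then show "B = inv\<^bsub>GG k\<^esub> A" using inv_equality[OF _ c, of B] by (simp add: GG_def)
  qed
qed



lemma Ginv:
  assumes "k > 0" "a \<in> Gmod k"
  shows "invG k a \<in> Gmod k" "mulG k (invG k a) a = idG k" "mulG k a (invG k a) = idG k"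
proof -
  interpret group "GG k" using GG_group[OF assms(1)] .
  have c: "a \<in> carrier (GG k)" using assms by (simp add: GG_def)
  show "invG k a \<in> Gmod k" "mulG k (invG k a) a = idG k" "mulG k a (invG k a) = idG k"
    using invG_eq[OF assms] l_inv[OF c] r_inv[OF c] inv_closed[OF c] by (simp_all add: GG_def)
qed

lemma cancel_left:
  assumes "k > 0" "a \<in> Gmod k" "z \<in> Gmod k"
  shows "mulG k (invG k a) (mulG k a z) = z"
  by (metis Ginv(2)[OF assms(1,2)] mulG_assoc mulG_lid[OF assms(3)])

lemma cancel_right:
  assumes "k > 0" "a \<in> Gmod k" "z \<in> Gmod k"
  shows "mulG k a (mulG k (invG k a) z) = z"
  by (metis Ginv(3)[OF assms(1,2)] mulG_assoc mulG_lid[OF assms(3)])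

lemma finite_Gmod: "finite (Gmod k :: (int^'d^'d) set)"
proof -
  let ?F = "PiE (UNIV::'d set) (\<lambda>_. PiE (UNIV::'d set) (\<lambda>_. {0..<int k}))"
  have "Gmod k \<subseteq> (\<lambda>f. \<chi> i j. f i j) ` ?F"
  proof
    fix A :: "int^'d^'d" assume "A \<in> Gmod k"
    then have "(\<lambda>i j. A$i$j) \<in> ?F" by (auto simp: Gmod_def)
    moreover have "A = (\<chi> i j. (\<lambda>i j. A$i$j) i j)" by (simp add: vec_eq_iff)
    ultimately show "A \<in> (\<lambda>f. \<chi> i j. f i j) ` ?F" by (intro image_eqI[where x="\<lambda>i j. A$i$j"]) simp_all
  qed
  moreover have "finite ?F" by (intro finite_PiE) auto
  ultimately show ?thesis by (meson finite_imageI finite_subset)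
qed

lemma redmat_Gmod_dvd:
  assumes "n > 0" "n dvd m" "A \<in> Gmod m"
  shows "redmat n A \<in> Gmod n"
proof (rule redmat_in_Gmod[OF assms(1)])
  have "int n dvd int m" using assms(2) by simp
  then have "det A mod int n = (det A mod int m) mod int n" by (simp add: mod_mod_cancel)
  also have "\<dots> = (1 mod int m) mod int n" using assms(3) by (simp add: Gmod_def)
  also have "\<dots> = 1 mod int n" using \<open>int n dvd int m\<close> by (simp add: mod_mod_cancel)
  finally show "det A mod int n = 1 mod int n" .
qed

lemma redmat_hom:
  assumes "n dvd m"
  shows "redmat n (mulG m A B) = mulG n (redmat n A) (redmat n B)"
  using assms by (simp add: mulG_def redmat_redmat redmat_mul_left redmat_mul_right)

lemma SLZ_Gmod: "k > 0 \<Longrightarrow> \<gamma> \<in> SLZ \<Longrightarrow> redmat k \<gamma> \<in> Gmod k"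
  by (rule redmat_in_Gmod) (auto simp: SLZ_def)

lemma hexp_le:
  fixes G :: "'a set"
  assumes "finite G" "X \<subseteq> G" "X \<noteq> {}" "2 * card X \<le> card G"
  shows "hexp G mul T \<le> real (card (bdry mul X T)) / real (card X)"
proof -
  have fin: "finite {A. A \<subseteq> G \<and> A \<noteq> {} \<and> 2 * card A \<le> card G}"
    by (rule finite_subset[of _ "Pow G"]) (use assms(1) in auto)
  show ?thesis unfolding hexp_def
    by (rule Min_le) (use fin assms in \<open>auto intro: finite_image_set\<close>)
qed



theorem claim1:
  fixes S :: "(int^'d^'d) set" and n0 :: nat and \<epsilon> :: real and \<delta> :: real
    and n m :: nat and f :: "int^'d^'d \<Rightarrow> int^'d^'d \<Rightarrow> nat"
  assumes d2: "CARD('d) \<ge> 2"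
    and S_fin: "finite S" and S_SL: "S \<subseteq> SLZ"
    and S_sym: "\<forall>g\<in>S. \<exists>h\<in>S. g ** h = mat 1"
    and n0_pos: "n0 > 0" and eps_pos: "\<epsilon> > 0"
    and expander: "\<forall>k::nat. k \<ge> 2 \<and> coprime k n0 \<longrightarrow>
                     hexp (Gmod k :: (int^'d^'d) set) (mulG k) (redmat k ` S) \<ge> \<epsilon>"
    and delta_def: "\<delta> = \<epsilon> / (32 * real (card S))"
    and n2: "n \<ge> 2" and m2: "m \<ge> 2" and ndvd: "n dvd m" and cop: "coprime m n0"
    and f_bin: "\<forall>x\<in>Gmod n. \<forall>y\<in>Gmod m. f x y \<in> {0, 1}"
    and close: "\<forall>\<gamma>\<in>S. \<forall>i<2. \<forall>j<2. \<bar>uu i j - vf n m f \<gamma> i j\<bar> < \<delta>"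
  shows "\<exists>Z \<subseteq> Gmod n.
           real (card {(x, y). x \<in> Gmod n \<and> y \<in> Gmod m \<and> f x y \<noteq> fZ n Z x y})
           < real (card (Gmod n :: (int^'d^'d) set)) * real (card (Gmod m :: (int^'d^'d) set)) / 16"
proof -
  have np: "n > 0" and mp: "m > 0" using n2 m2 by auto
  let ?N = "Gmod n :: (int^'d^'d) set" and ?M = "Gmod m :: (int^'d^'d) set"
  have finN: "finite ?N" and finM: "finite ?M" by (rule finite_Gmod)+
  have pM: "redmat n y \<in> ?N" if "y \<in> ?M" for y using redmat_Gmod_dvd[OF np ndvd that] .
  have gM: "redmat m \<gamma> \<in> ?M" if "\<gamma> \<in> S" for \<gamma> using SLZ_Gmod[OF mp] S_SL that by blast
  have gN: "redmat n \<gamma> \<in> ?N" if "\<gamma> \<in> S" for \<gamma> using SLZ_Gmod[OF np] S_SL that by blast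
  define \<Psi> where "\<Psi> z y = mulG n (redmat n y) z" for z y :: "int^'d^'d"
  have \<Psi>N: "\<Psi> z y \<in> ?N" if "z \<in> ?N" "y \<in> ?M" for z y
    unfolding \<Psi>_def by (rule mulG_closed[OF np pM[OF that(2)] that(1)])
  have count: "card {(x,y). x \<in> ?N \<and> y \<in> ?M \<and> Q x y} = (\<Sum>z\<in>?N. card {y\<in>?M. Q (\<Psi> z y) y})" for Q
  proof -
    let ?T = "SIGMA z:?N. {y\<in>?M. Q (\<Psi> z y) y}"
    let ?F = "\<lambda>(z,y). (\<Psi> z y, y)"
    have inj: "inj_on ?F ?T"
    proof (rule inj_onI, clarsimp)
      fix z y z' assume "z \<in> ?N" "y \<in> ?M" "z' \<in> ?N" "\<Psi> z y = \<Psi> z' y"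
      then show "z = z'" unfolding \<Psi>_def
        by (metis cancel_left[OF np pM])
    qed
    have img: "?F ` ?T = {(x,y). x \<in> ?N \<and> y \<in> ?M \<and> Q x y}"
    proof
      show "?F ` ?T \<subseteq> {(x,y). x \<in> ?N \<and> y \<in> ?M \<and> Q x y}" using \<Psi>N by auto
      show "{(x,y). x \<in> ?N \<and> y \<in> ?M \<and> Q x y} \<subseteq> ?F ` ?T"
      proof clarify
        fix x y assume xy: "x \<in> ?N" "y \<in> ?M" "Q x y"
        define z where "z = mulG n (invG n (redmat n y)) x"
        have zN: "z \<in> ?N" unfolding z_def using Ginv(1)[OF np pM[OF xy(2)]] xy(1) mulG_closed[OF np] by blast
        have "\<Psi> z y = x" unfolding z_def \<Psi>_def using cancel_right[OF np pM[OF xy(2)] xy(1)] .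
        then show "(x,y) \<in> ?F ` ?T" using zN xy by (intro image_eqI[where x="(z,y)"]) auto
      qed
    qed
    have "card {(x,y). x \<in> ?N \<and> y \<in> ?M \<and> Q x y} = card ?T"
      using card_image[OF inj] img by simp
    also have "\<dots> = (\<Sum>z\<in>?N. card {y\<in>?M. Q (\<Psi> z y) y})"
      using finN finM by (intro card_SigmaI) auto
    finally show ?thesis .
  qed
  define h where "h z y = f (\<Psi> z y) y" for z y
  define A where "A z = {y\<in>?M. h z y = 1}" for z
  define Z where "Z = {z\<in>?N. card ?M < 2 * card (A z)}"
  have hbin: "h z y = 0 \<or> h z y = 1" if "z \<in> ?N" "y \<in> ?M" for z y
    using f_bin \<Psi>N[OF that] that(2) unfolding h_def by auto
  have fZeq: "fZ n Z (\<Psi> z y) y = (if z \<in> Z then 1 else 0)" if "z \<in> ?N" "y \<in> ?M" for z y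
    unfolding fZ_def \<Psi>_def using cancel_left[OF np pM[OF that(2)] that(1)] by simp
  have sig: "f (mulG n (redmat n \<gamma>) (\<Psi> z y)) (mulG m (redmat m \<gamma>) y) = f (\<Psi> z (mulG m (redmat m \<gamma>) y)) (mulG m (redmat m \<gamma>) y)"
    if "\<gamma> \<in> S" for \<gamma> z y
  proof -
    have "\<Psi> z (mulG m (redmat m \<gamma>) y) = mulG n (mulG n (redmat n (redmat m \<gamma>)) (redmat n y)) z"
      unfolding \<Psi>_def by (simp only: redmat_hom[OF ndvd])
    also have "\<dots> = mulG n (redmat n \<gamma>) (\<Psi> z y)"
      unfolding \<Psi>_def by (simp only: redmat_redmat[OF ndvd] mulG_assoc)
    finally show ?thesis by simp
  qed
  define E where "E \<gamma> = {(x,y). x \<in> ?N \<and> y \<in> ?M \<and> f x y \<noteq> f (mulG n (redmat n \<gamma>) x) (mulG m (redmat m \<gamma>) y)}" for \<gamma>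
  define c where "c \<gamma> z = card {y\<in>?M. h z y \<noteq> h z (mulG m (redmat m \<gamma>) y)}" for \<gamma> z
  have Ec: "card (E \<gamma>) = (\<Sum>z\<in>?N. c \<gamma> z)" if "\<gamma> \<in> S" for \<gamma>
    proof -
    have "card (E \<gamma>) = (\<Sum>z\<in>?N. card {y\<in>?M. f (\<Psi> z y) y \<noteq> f (mulG n (redmat n \<gamma>) (\<Psi> z y)) (mulG m (redmat m \<gamma>) y)})"
      unfolding E_def by (rule count)
    also have "\<dots> = (\<Sum>z\<in>?N. c \<gamma> z)"
      unfolding c_def h_def sig[OF that] ..
    finally show ?thesis .
  qed
  have NMpos: "real (card ?N) * real (card ?M) > 0"
  proof -
    have "card ?N > 0" using idG_closed[OF np] finN card_gt_0_iff by blast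
    moreover have "card ?M > 0" using idG_closed[OF mp] finM card_gt_0_iff by blast
    ultimately show ?thesis by simp
  qed
  have Ebound: "real (card (E \<gamma>)) < 2 * \<delta> * (real (card ?N) * real (card ?M))" if "\<gamma> \<in> S" for \<gamma>
  proof -
    define E01 where "E01 = {(x, y). x \<in> ?N \<and> y \<in> ?M \<and> f x y = 0 \<and>
                  f (mulG n (redmat n \<gamma>) x) (mulG m (redmat m \<gamma>) y) = 1}"
    define E10 where "E10 = {(x, y). x \<in> ?N \<and> y \<in> ?M \<and> f x y = 1 \<and>
                  f (mulG n (redmat n \<gamma>) x) (mulG m (redmat m \<gamma>) y) = 0}"
    have sub: "E \<gamma> \<subseteq> E01 \<union> E10"
    proof
      fix p assume "p \<in> E \<gamma>"
      then obtain x y where p: "p = (x,y)" and xy: "x \<in> ?N" "y \<in> ?M" "f x y \<noteq> f (mulG n (redmat n \<gamma>) x) (mulG m (redmat m \<gamma>) y)"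
        by (auto simp: E_def)
      have "mulG n (redmat n \<gamma>) x \<in> ?N" using mulG_closed[OF np gN[OF that] xy(1)] .
      moreover have "mulG m (redmat m \<gamma>) y \<in> ?M" using mulG_closed[OF mp gM[OF that] xy(2)] .
      ultimately have b2: "f (mulG n (redmat n \<gamma>) x) (mulG m (redmat m \<gamma>) y) = 0 \<or> f (mulG n (redmat n \<gamma>) x) (mulG m (redmat m \<gamma>) y) = 1"
        using f_bin by blast
      have b1: "f x y = 0 \<or> f x y = 1" using f_bin xy by blast
      show "p \<in> E01 \<union> E10" using b1 b2 xy unfolding p E01_def E10_def by auto
    qed
    have fin01: "finite (E01 \<union> E10)"
      by (rule finite_subset[of _ "?N \<times> ?M"]) (auto simp: E01_def E10_def finN finM)
    have "card (E \<gamma>) \<le> card E01 + card E10"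
      using card_mono[OF fin01 sub] card_Un_le[of E01 E10] by linarith
    moreover have "real (card E01) < \<delta> * (real (card ?N) * real (card ?M))"
    proof -
      have "\<bar>uu 0 1 - vf n m f \<gamma> 0 1\<bar> < \<delta>" using close that by auto
      then have "vf n m f \<gamma> 0 1 < \<delta>" by (simp add: uu_def)
      then show ?thesis using NMpos by (simp add: vf_def E01_def pos_divide_less_eq)
    qed
    moreover have "real (card E10) < \<delta> * (real (card ?N) * real (card ?M))"
    proof -
      have "\<bar>uu 1 0 - vf n m f \<gamma> 1 0\<bar> < \<delta>" using close that by auto
      then have "vf n m f \<gamma> 1 0 < \<delta>" by (simp add: uu_def)
      then show ?thesis using NMpos by (simp add: vf_def E10_def pos_divide_less_eq)
    qed
    ultimately show ?thesis by linarith
  qed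
  have expand: "\<epsilon> * real (card X) \<le> (\<Sum>\<gamma>\<in>S. real (card {y\<in>X. mulG m (redmat m \<gamma>) y \<notin> X}))"
    if X: "X \<subseteq> ?M" "2 * card X \<le> card ?M" for X
  proof (cases "X = {}")
    case True then show ?thesis by (simp add: sum_nonneg)
  next
    case False
    have cX: "real (card X) > 0" using False finite_subset[OF X(1) finM] by (simp add: card_gt_0_iff)
    have "\<epsilon> \<le> hexp ?M (mulG m) (redmat m ` S)" using expander[rule_format, OF conjI[OF m2 cop]] .
    also have "\<dots> \<le> real (card (bdry (mulG m) X (redmat m ` S))) / real (card X)"
      by (rule hexp_le[OF finM X(1) False X(2)])
    finally have "\<epsilon> * real (card X) \<le> real (card (bdry (mulG m) X (redmat m ` S)))"
      using cX by (simp add: pos_le_divide_eq)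
    also have "\<dots> \<le> real (card (\<Union>\<gamma>\<in>S. {y\<in>X. mulG m (redmat m \<gamma>) y \<notin> X}))"
    proof -
      have "bdry (mulG m) X (redmat m ` S) \<subseteq> (\<Union>\<gamma>\<in>S. {y\<in>X. mulG m (redmat m \<gamma>) y \<notin> X})"
        unfolding bdry_def by auto
      moreover have "finite (\<Union>\<gamma>\<in>S. {y\<in>X. mulG m (redmat m \<gamma>) y \<notin> X})"
        using S_fin finite_subset[OF X(1) finM] by auto
      ultimately show ?thesis unfolding of_nat_le_iff by (rule card_mono[rotated])
    qed
    also have "\<dots> \<le> (\<Sum>\<gamma>\<in>S. real (card {y\<in>X. mulG m (redmat m \<gamma>) y \<notin> X}))"
      unfolding of_nat_sum[symmetric] of_nat_le_iff by (rule card_UN_le[OF S_fin])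
    finally show ?thesis .
  qed
  define bad where "bad z = card {y\<in>?M. h z y \<noteq> (if z \<in> Z then 1 else 0)}" for z
  have badb: "\<epsilon> * real (bad z) \<le> (\<Sum>\<gamma>\<in>S. real (c \<gamma> z))" if zN: "z \<in> ?N" for z
  proof (cases "z \<in> Z")
    case False
    have eq: "{y\<in>?M. h z y \<noteq> (if z \<in> Z then 1 else 0)} = A z"
    proof (unfold A_def, rule Collect_cong)
      fix y show "(y\<in>?M \<and> h z y \<noteq> (if z \<in> Z then 1 else 0)) = (y\<in>?M \<and> h z y = 1)"
        using False by (cases "y \<in> ?M") (use hbin[OF zN, of y] in auto)
    qed
    have "2 * card (A z) \<le> card ?M" using False zN by (simp add: Z_def)
    then have "\<epsilon> * real (card (A z)) \<le> (\<Sum>\<gamma>\<in>S. real (card {y\<in>A z. mulG m (redmat m \<gamma>) y \<notin> A z}))"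
      by (intro expand) (auto simp: A_def)
    also have "\<dots> \<le> (\<Sum>\<gamma>\<in>S. real (c \<gamma> z))"
    proof (rule sum_mono)
      fix \<gamma> assume g: "\<gamma> \<in> S"
      have "{y\<in>A z. mulG m (redmat m \<gamma>) y \<notin> A z} \<subseteq> {y\<in>?M. h z y \<noteq> h z (mulG m (redmat m \<gamma>) y)}"
        using mulG_closed[OF mp gM[OF g]] by (auto simp: A_def)
      then show "real (card {y\<in>A z. mulG m (redmat m \<gamma>) y \<notin> A z}) \<le> real (c \<gamma> z)"
        unfolding c_def using finM by (simp add: card_mono)
    qed
    finally show ?thesis unfolding bad_def eq .
  next
    case True
    define X where "X = ?M - A z"
    have eq: "{y\<in>?M. h z y \<noteq> (if z \<in> Z then 1 else 0)} = X"
      using True by (auto simp: A_def X_def)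
    have AM: "A z \<subseteq> ?M" by (auto simp: A_def)
    have "card X = card ?M - card (A z)" unfolding X_def using card_Diff_subset[OF finite_subset[OF AM finM] AM] .
    moreover have "card ?M < 2 * card (A z)" using True by (simp add: Z_def)
    moreover have "card (A z) \<le> card ?M" using card_mono[OF finM AM] .
    ultimately have "2 * card X \<le> card ?M" by linarith
    then have "\<epsilon> * real (card X) \<le> (\<Sum>\<gamma>\<in>S. real (card {y\<in>X. mulG m (redmat m \<gamma>) y \<notin> X}))"
      by (intro expand) (auto simp: X_def)
    also have "\<dots> \<le> (\<Sum>\<gamma>\<in>S. real (c \<gamma> z))"
    proof (rule sum_mono)
      fix \<gamma> assume g: "\<gamma> \<in> S"
      have "{y\<in>X. mulG m (redmat m \<gamma>) y \<notin> X} \<subseteq> {y\<in>?M. h z y \<noteq> h z (mulG m (redmat m \<gamma>) y)}"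
        using mulG_closed[OF mp gM[OF g]] by (auto simp: A_def X_def)
      then show "real (card {y\<in>X. mulG m (redmat m \<gamma>) y \<notin> X}) \<le> real (c \<gamma> z)"
        unfolding c_def using finM by (simp add: card_mono)
    qed
    finally show ?thesis unfolding bad_def eq .
  qed
  have Dcount: "card {(x, y). x \<in> ?N \<and> y \<in> ?M \<and> f x y \<noteq> fZ n Z x y} = (\<Sum>z\<in>?N. bad z)"
    unfolding count bad_def h_def
    by (intro sum.cong refl arg_cong[where f=card]) (auto simp: fZeq)
  have tot: "\<epsilon> * real (\<Sum>z\<in>?N. bad z) \<le> (\<Sum>\<gamma>\<in>S. real (card (E \<gamma>)))"
  proof -
    have "\<epsilon> * real (\<Sum>z\<in>?N. bad z) = (\<Sum>z\<in>?N. \<epsilon> * real (bad z))"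
      by (simp add: sum_distrib_left)
    also have "\<dots> \<le> (\<Sum>z\<in>?N. \<Sum>\<gamma>\<in>S. real (c \<gamma> z))" by (rule sum_mono) (rule badb)
    also have "\<dots> = (\<Sum>\<gamma>\<in>S. \<Sum>z\<in>?N. real (c \<gamma> z))" by (rule sum.swap)
    also have "\<dots> = (\<Sum>\<gamma>\<in>S. real (card (E \<gamma>)))" by (intro sum.cong refl) (simp add: Ec)
    finally show ?thesis .
  qed
  have "real (\<Sum>z\<in>?N. bad z) < real (card ?N) * real (card ?M) / 16"
  proof (cases "S = {}")
    case True
    then have "\<epsilon> * real (\<Sum>z\<in>?N. bad z) \<le> 0" using tot by simp
    then have "real (\<Sum>z\<in>?N. bad z) \<le> 0" using eps_pos by (simp add: mult_le_0_iff)
    then show ?thesis using NMpos by linarith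
  next
    case False
    have cS: "real (card S) > 0" using False S_fin by (simp add: card_gt_0_iff)
    have "(\<Sum>\<gamma>\<in>S. real (card (E \<gamma>))) < (\<Sum>\<gamma>\<in>S. 2 * \<delta> * (real (card ?N) * real (card ?M)))"
      using Ebound False S_fin by (intro sum_strict_mono) auto
    also have "\<dots> = \<epsilon> * (real (card ?N) * real (card ?M) / 16)"
      using cS by (simp add: delta_def field_simps)
    finally have "\<epsilon> * real (\<Sum>z\<in>?N. bad z) < \<epsilon> * (real (card ?N) * real (card ?M) / 16)"
      using tot by linarith
    then show ?thesis using eps_pos by simp
  qed
  moreover have "Z \<subseteq> ?N" by (auto simp: Z_def)
  ultimately show ?thesis using Dcount by (intro exI[of _ Z]) simp
qed

end
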